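(* For all positive integers $m,n,w,d$ with $n\ge 2$, $w\le m$ and $d\ge w+1$, we have $A(m,n,w,d)\le A(m,n-1,w,d-w)$.
   Context: $J(m,w)$ denotes the set of binary vectors of length $m$ and Hamming weight $w$. Elements of $J(m,w)^n$ are identified with $m\times n$ binary matrices all of whose columns have weight $w$, with distance the binary Hamming distance (number of differing entries). $A(m,n,w,d)$ denotes the maximum cardinality of a nonempty subset of $J(m,w)^n$ in which any two distinct elements are at Hamming distance at least $2d$. *)

theory Defs
  imports Main
begin

text \<open>An m x n binary matrix is represented as a function nat => nat => bool
  that is False outside the index range {..<m} x {..<n}.
  const_wt_mats m n w is J(m,w)^n: all m x n binary matrices whose every column
  has Hamming weight w.\<close>

definition const_wt_mats :: "nat \<Rightarrow> nat \<Rightarrow> nat \<Rightarrow> (nat \<Rightarrow> nat \<Rightarrow> bool) set" where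
  "const_wt_mats m n w =
     {M. (\<forall>i j. M i j \<longrightarrow> i < m \<and> j < n) \<and>
         (\<forall>j<n. card {i. i < m \<and> M i j} = w)}"

definition mat_hdist :: "nat \<Rightarrow> nat \<Rightarrow> (nat \<Rightarrow> nat \<Rightarrow> bool) \<Rightarrow> (nat \<Rightarrow> nat \<Rightarrow> bool) \<Rightarrow> nat" where
  "mat_hdist m n M N = card {(i, j). i < m \<and> j < n \<and> M i j \<noteq> N i j}"

definition A_code :: "nat \<Rightarrow> nat \<Rightarrow> nat \<Rightarrow> nat \<Rightarrow> nat" where
  "A_code m n w d = Max {card C | C. C \<subseteq> const_wt_mats m n w \<and> C \<noteq> {} \<and>
      (\<forall>x\<in>C. \<forall>y\<in>C. x \<noteq> y \<longrightarrow> 2 * d \<le> mat_hdist m n x y)}"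

end

theory Submission
  imports Defs
begin

lemma cwm_finite: "finite (const_wt_mats m n w)"
proof -
  have "const_wt_mats m n w \<subseteq> (\<lambda>A i j. (i,j) \<in> A) ` Pow ({..<m}\<times>{..<n})"
  proof
    fix M assume M: "M \<in> const_wt_mats m n w"
    have "M = (\<lambda>i j. (i,j) \<in> {(i,j). M i j})" by auto
    moreover have "{(i,j). M i j} \<in> Pow ({..<m}\<times>{..<n})"
      using M unfolding const_wt_mats_def by auto
    ultimately show "M \<in> (\<lambda>A i j. (i,j) \<in> A) ` Pow ({..<m}\<times>{..<n})" by blast
  qed
  thus ?thesis by (rule finite_subset) simp
qed

definition tr :: "nat \<Rightarrow> (nat \<Rightarrow> nat \<Rightarrow> bool) \<Rightarrow> (nat \<Rightarrow> nat \<Rightarrow> bool)" where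
  "tr k M = (\<lambda>i j. M i j \<and> j < k)"

lemma tr_mem: "x \<in> const_wt_mats m n w \<Longrightarrow> tr (n-1) x \<in> const_wt_mats m (n-1) w"
  unfolding const_wt_mats_def tr_def by auto

lemma dist_split:
  assumes x: "x \<in> const_wt_mats m n w" and y: "y \<in> const_wt_mats m n w" and n: "n \<ge> 1"
  shows "mat_hdist m n x y \<le> mat_hdist m (n-1) (tr (n-1) x) (tr (n-1) y) + 2*w"
proof -
  let ?D1 = "{(i,j). i < m \<and> j < n-1 \<and> x i j \<noteq> y i j}"
  let ?D2 = "{(i,j). i < m \<and> j = n-1 \<and> x i j \<noteq> y i j}"
  let ?X = "{i. i < m \<and> x i (n-1)}" and ?Y = "{i. i < m \<and> y i (n-1)}"
  have D: "{(i,j). i < m \<and> j < n \<and> x i j \<noteq> y i j} = ?D1 \<union> ?D2" using n by auto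
  have f1: "finite ?D1" by (rule finite_subset[of _ "{..<m}\<times>{..<n-1}"]) auto
  have f2: "finite ?D2" by (rule finite_subset[of _ "{..<m}\<times>{n-1}"]) auto
  have "?D2 \<subseteq> (\<lambda>i. (i,n-1)) ` (?X \<union> ?Y)" by auto
  hence "card ?D2 \<le> card ((\<lambda>i. (i,n-1)) ` (?X \<union> ?Y))"
    by (rule card_mono[rotated]) auto
  also have "\<dots> \<le> card (?X \<union> ?Y)" by (rule card_image_le) auto
  also have "\<dots> \<le> card ?X + card ?Y" by (rule card_Un_le)
  also have "card ?X = w" using x n unfolding const_wt_mats_def by auto
  also have "card ?Y = w" using y n unfolding const_wt_mats_def by auto
  finally have c2: "card ?D2 \<le> 2*w" by simp
  have e: "mat_hdist m (n-1) (tr (n-1) x) (tr (n-1) y) = card ?D1"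
    unfolding mat_hdist_def tr_def by (rule arg_cong[where f=card]) auto
  have "mat_hdist m n x y \<le> card ?D1 + card ?D2"
    unfolding mat_hdist_def D by (rule card_Un_le)
  thus ?thesis using c2 e by simp
qed

theorem proposition2:
  fixes m n w d :: nat
  assumes "0 < m" "0 < n" "0 < w" "0 < d"
    and "n \<ge> 2" and "w \<le> m" and "d \<ge> w + 1"
  shows "A_code m n w d \<le> A_code m (n - 1) w (d - w)"
proof -
  let ?S = "{card C | C. C \<subseteq> const_wt_mats m n w \<and> C \<noteq> {} \<and>
      (\<forall>x\<in>C. \<forall>y\<in>C. x \<noteq> y \<longrightarrow> 2 * d \<le> mat_hdist m n x y)}"
  let ?T = "{card C | C. C \<subseteq> const_wt_mats m (n-1) w \<and> C \<noteq> {} \<and>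
      (\<forall>x\<in>C. \<forall>y\<in>C. x \<noteq> y \<longrightarrow> 2 * (d-w) \<le> mat_hdist m (n-1) x y)}"
  have finS: "finite ?S"
  proof -
    have "?S \<subseteq> {..card (const_wt_mats m n w)}"
      proof
      fix s assume "s \<in> ?S"
      then obtain C where "s = card C" "C \<subseteq> const_wt_mats m n w" by blast
      thus "s \<in> {..card (const_wt_mats m n w)}" using cwm_finite card_mono by (simp add: card_mono cwm_finite)
    qed
    thus ?thesis by (rule finite_subset) simp
  qed
  have finT: "finite ?T"
  proof -
    have "?T \<subseteq> {..card (const_wt_mats m (n-1) w)}"
      proof
      fix s assume "s \<in> ?T"
      then obtain C where "s = card C" "C \<subseteq> const_wt_mats m (n-1) w" by blast
      thus "s \<in> {..card (const_wt_mats m (n-1) w)}" using cwm_finite card_mono by (simp add: card_mono cwm_finite)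
    qed
    thus ?thesis by (rule finite_subset) simp
  qed
  define M0 where "M0 = (\<lambda>i j. i < w \<and> j < n)"
  have "{i. i < m \<and> M0 i j} = {..<w}" if "j < n" for j
    using that assms(6) unfolding M0_def by auto
  hence cc: "\<forall>j<n. card {i. i < m \<and> M0 i j} = w" by simp
  have "\<forall>i j. M0 i j \<longrightarrow> i < m \<and> j < n" using assms(6) unfolding M0_def by simp
  hence "M0 \<in> const_wt_mats m n w" using cc unfolding const_wt_mats_def by blast
  hence "card {M0} \<in> ?S" by blast
  hence neS: "?S \<noteq> {}" by blast
  have ball: "\<forall>s\<in>?S. \<exists>t\<in>?T. s \<le> t"
  proof
    fix s assume "s \<in> ?S"
    then obtain C where C: "s = card C" "C \<subseteq> const_wt_mats m n w" "C \<noteq> {}"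
      "\<forall>x\<in>C. \<forall>y\<in>C. x \<noteq> y \<longrightarrow> 2 * d \<le> mat_hdist m n x y" by blast
    have dd: "2*(d-w) \<le> mat_hdist m (n-1) (tr (n-1) x) (tr (n-1) y)"
      if "x \<in> C" "y \<in> C" "x \<noteq> y" for x y
    proof -
      have "2*d \<le> mat_hdist m n x y" using C(4) that by blast
      moreover have "mat_hdist m n x y \<le> mat_hdist m (n-1) (tr (n-1) x) (tr (n-1) y) + 2*w"
        using dist_split[of x m n w y] C(2) that assms(5) by auto
      ultimately show ?thesis by linarith
    qed
    have inj: "inj_on (tr (n-1)) C"
    proof (rule inj_onI, rule ccontr)
      fix x y assume "x \<in> C" "y \<in> C" "tr (n-1) x = tr (n-1) y" "x \<noteq> y"
      moreover have "mat_hdist m (n-1) (tr (n-1) x) (tr (n-1) x) = 0"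
        unfolding mat_hdist_def by simp
      ultimately show False using dd[of x y] assms by auto
    qed
    have sub: "tr (n-1) ` C \<subseteq> const_wt_mats m (n-1) w" using C(2) tr_mem by blast
    have ne: "tr (n-1) ` C \<noteq> {}" using C(3) by simp
    have dd2: "\<forall>u\<in>tr (n-1) ` C. \<forall>v\<in>tr (n-1) ` C. u \<noteq> v \<longrightarrow> 2 * (d-w) \<le> mat_hdist m (n-1) u v"
      using dd by blast
    have mem: "card (tr (n-1) ` C) \<in> ?T"
      using sub ne dd2 by blast
    have eq: "card (tr (n-1) ` C) = s" using inj C by (simp add: card_image)
    show "\<exists>t\<in>?T. s \<le> t"
    proof (rule bexI)
      show "s \<le> card (tr (n-1) ` C)" using eq by simp
      show "card (tr (n-1) ` C) \<in> ?T" by (rule mem)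
    qed
  qed
  hence "Max ?S \<le> Max ?T" using finS finT neS
  proof -
    have "Max ?S \<in> ?S" using finS neS by (rule Max_in)
    with ball have "\<exists>t\<in>?T. Max ?S \<le> t" by (rule bspec)
    then obtain t where "t \<in> ?T" "Max ?S \<le> t" by (rule bexE)
    moreover have "t \<le> Max ?T" using finT \<open>t \<in> ?T\<close> by (rule Max_ge)
    ultimately show ?thesis by linarith
  qed
  thus ?thesis unfolding A_code_def .
qed

end
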